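(* Let $G=(V,E)$ be a connected chordal graph of maximum degree $\Delta$ and let $U\subseteq V$ be a nonempty self-contained set. For $v\in U$, let $p_v$ be the fraction of ordered pairs $(a,b)\in U^2$ such that $v$ lies on some shortest path in $G$ between $a$ and $b$. Then $\max_{v\in U}p_v\ge \frac{1}{2(\Delta+1)}$.
   Context: $\delta$ is the shortest-path metric of the unweighted graph $G$. A graph is chordal if every cycle of length greater than three has a chord. A set $U\subseteq V$ is self-contained if for every $(x,y)\in U^2$, every shortest path in $G$ between $x$ and $y$ uses only vertices of $U$. A vertex lies on a path if it is one of its vertices (including endpoints). *)

theory Defs
  imports Complex_Main
begin

definition simple_graph :: "'a set \<Rightarrow> ('a \<Rightarrow> 'a \<Rightarrow> bool) \<Rightarrow> bool" where
  "simple_graph V E \<longleftrightarrow> finite V \<and> (\<forall>x y. E x y \<longrightarrow> x \<in> V \<and> y \<in> V) \<and>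
     (\<forall>x y. E x y \<longrightarrow> E y x) \<and> (\<forall>x. \<not> E x x)"

definition is_walk :: "('a \<Rightarrow> 'a \<Rightarrow> bool) \<Rightarrow> 'a list \<Rightarrow> bool" where
  "is_walk E xs \<longleftrightarrow> xs \<noteq> [] \<and> (\<forall>i. Suc i < length xs \<longrightarrow> E (xs ! i) (xs ! Suc i))"

definition connected_graph :: "'a set \<Rightarrow> ('a \<Rightarrow> 'a \<Rightarrow> bool) \<Rightarrow> bool" where
  "connected_graph V E \<longleftrightarrow>
     (\<forall>x\<in>V. \<forall>y\<in>V. \<exists>xs. is_walk E xs \<and> hd xs = x \<and> last xs = y)"

definition gdist :: "('a \<Rightarrow> 'a \<Rightarrow> bool) \<Rightarrow> 'a \<Rightarrow> 'a \<Rightarrow> nat" where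
  "gdist E x y = (LEAST n. \<exists>xs. is_walk E xs \<and> hd xs = x \<and> last xs = y \<and> length xs = Suc n)"

definition shortest_path :: "('a \<Rightarrow> 'a \<Rightarrow> bool) \<Rightarrow> 'a \<Rightarrow> 'a \<Rightarrow> 'a list \<Rightarrow> bool" where
  "shortest_path E x y xs \<longleftrightarrow>
     is_walk E xs \<and> hd xs = x \<and> last xs = y \<and> length xs = Suc (gdist E x y)"

definition chordal :: "'a set \<Rightarrow> ('a \<Rightarrow> 'a \<Rightarrow> bool) \<Rightarrow> bool" where
  "chordal V E \<longleftrightarrow>
     (\<forall>cs. distinct cs \<and> set cs \<subseteq> V \<and> length cs > 3 \<and>
        (\<forall>i < length cs. E (cs ! i) (cs ! ((i + 1) mod length cs))) \<longrightarrow>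
        (\<exists>i < length cs. \<exists>j < length cs. i \<noteq> j \<and>
            j \<noteq> (i + 1) mod length cs \<and> i \<noteq> (j + 1) mod length cs \<and>
            E (cs ! i) (cs ! j)))"

definition self_contained :: "('a \<Rightarrow> 'a \<Rightarrow> bool) \<Rightarrow> 'a set \<Rightarrow> bool" where
  "self_contained E U \<longleftrightarrow>
     (\<forall>x\<in>U. \<forall>y\<in>U. \<forall>xs. shortest_path E x y xs \<longrightarrow> set xs \<subseteq> U)"

definition max_degree :: "'a set \<Rightarrow> ('a \<Rightarrow> 'a \<Rightarrow> bool) \<Rightarrow> nat" where
  "max_degree V E = Max ((\<lambda>v. card {u \<in> V. E v u}) ` V)"

definition pfrac :: "('a \<Rightarrow> 'a \<Rightarrow> bool) \<Rightarrow> 'a set \<Rightarrow> 'a \<Rightarrow> real" where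
  "pfrac E U v =
     real (card {(a, b) \<in> U \<times> U. \<exists>xs. shortest_path E a b xs \<and> v \<in> set xs})
     / real (card (U \<times> U))"

end

theory Submission
  imports Defs
begin

lemma walk_Cons: "is_walk E (x # xs) \<longleftrightarrow> (xs = [] \<or> (E x (hd xs) \<and> is_walk E xs))"
proof (cases xs)
  case Nil thus ?thesis by (simp add: is_walk_def)
next
  case (Cons y ys)
  show ?thesis
  proof
    assume h: "is_walk E (x # xs)"
    have "E x (hd xs)" using h Cons by (auto simp: is_walk_def)
    moreover have "is_walk E xs" unfolding is_walk_def
    proof (intro conjI allI impI)
      show "xs \<noteq> []" using Cons by simp
      fix i assume "Suc i < length xs"
      thus "E (xs ! i) (xs ! Suc i)" using h unfolding is_walk_def
        by (metis Suc_less_eq length_Cons nth_Cons_Suc)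
    qed
    ultimately show "xs = [] \<or> (E x (hd xs) \<and> is_walk E xs)" by simp
  next
    assume h: "xs = [] \<or> (E x (hd xs) \<and> is_walk E xs)"
    hence h1: "E x (hd xs)" and h2: "is_walk E xs" using Cons by auto
    show "is_walk E (x # xs)" unfolding is_walk_def
    proof (intro conjI allI impI)
      show "x # xs \<noteq> []" by simp
      fix i assume i: "Suc i < length (x # xs)"
      show "E ((x # xs) ! i) ((x # xs) ! Suc i)"
      proof (cases i)
        case 0 thus ?thesis using h1 Cons by simp
      next
        case (Suc j) thus ?thesis using h2 i unfolding is_walk_def by simp
      qed
    qed
  qed
qed

lemma walk_append: "is_walk E xs \<Longrightarrow> is_walk E ys \<Longrightarrow> E (last xs) (hd ys) \<Longrightarrow> is_walk E (xs @ ys)"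
proof (induction xs)
  case Nil thus ?case by (simp add: is_walk_def)
next
  case (Cons x xs)
  show ?case
  proof (cases "xs = []")
    case True
    have "ys \<noteq> []" using Cons.prems(2) by (simp add: is_walk_def)
    thus ?thesis using True Cons.prems by (simp add: walk_Cons)
  next
    case False
    hence "E x (hd xs)" "is_walk E xs" using Cons.prems(1) by (auto simp: walk_Cons)
    moreover have "E (last xs) (hd ys)" using Cons.prems(3) False by simp
    ultimately have "is_walk E (xs @ ys)" using Cons by simp
    thus ?thesis using False \<open>E x (hd xs)\<close> by (simp add: walk_Cons)
  qed
qed

lemma walk_take: "is_walk E xs \<Longrightarrow> 0 < n \<Longrightarrow> is_walk E (take n xs)"
  unfolding is_walk_def by auto

lemma walk_drop: "is_walk E xs \<Longrightarrow> n < length xs \<Longrightarrow> is_walk E (drop n xs)"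
  unfolding is_walk_def by (auto simp: add.commute)

lemma walk_snocD: "is_walk E (xs @ [x]) \<Longrightarrow> xs \<noteq> [] \<Longrightarrow> is_walk E xs \<and> E (last xs) x"
proof -
  assume h: "is_walk E (xs @ [x])" and ne: "xs \<noteq> []"
  have "is_walk E (take (length xs) (xs @ [x]))" using walk_take[OF h, of "length xs"] ne by simp
  hence w: "is_walk E xs" by simp
  have "E ((xs@[x]) ! (length xs - 1)) ((xs@[x]) ! Suc (length xs - 1))"
    using h ne unfolding is_walk_def by (metis One_nat_def Suc_pred length_append_singleton length_greater_0_conv lessI)
  moreover have "(xs@[x]) ! (length xs - 1) = last xs" using ne by (simp add: last_conv_nth nth_append)
  moreover have "(xs@[x]) ! Suc (length xs - 1) = x" using ne by simp
  ultimately have "E (last xs) x" by simp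
  with w show ?thesis by simp
qed

inductive reach :: "('a \<Rightarrow> 'a \<Rightarrow> bool) \<Rightarrow> 'a set \<Rightarrow> 'a \<Rightarrow> 'a \<Rightarrow> bool" for E W where
  rrefl: "a \<in> W \<Longrightarrow> reach E W a a"
| rstep: "reach E W a b \<Longrightarrow> E b c \<Longrightarrow> c \<in> W \<Longrightarrow> reach E W a c"

lemma reach_in: "reach E W a b \<Longrightarrow> a \<in> W \<and> b \<in> W"
  by (induction rule: reach.induct) auto

lemma reach_trans: "reach E W b c \<Longrightarrow> reach E W a b \<Longrightarrow> reach E W a c"
  by (induction rule: reach.induct) (auto intro: reach.rstep)

lemma reach_sym: assumes "\<And>x y. E x y \<Longrightarrow> E y x" shows "reach E W a b \<Longrightarrow> reach E W b a"
proof (induction rule: reach.induct)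
  case (rrefl a) thus ?case by (rule reach.rrefl)
next
  case (rstep a b c)
  have "reach E W c b" using rstep reach_in[OF rstep(1)] assms
    by (meson reach.rrefl reach.rstep)
  thus ?case using rstep reach_trans by metis
qed

lemma walk_reach: "is_walk E xs \<Longrightarrow> set xs \<subseteq> W \<Longrightarrow> reach E W (hd xs) (last xs)"
proof (induction xs rule: rev_induct)
  case Nil thus ?case by (simp add: is_walk_def)
next
  case (snoc x xs)
  show ?case
  proof (cases "xs = []")
    case True thus ?thesis using snoc.prems by (auto intro: reach.rrefl)
  next
    case False
    from walk_snocD[OF snoc.prems(1) False] have "is_walk E xs" "E (last xs) x" by auto
    thus ?thesis using snoc False by (auto intro: reach.rstep)
  qed
qed

lemma reach_walk: "reach E W a b \<Longrightarrow> \<exists>xs. is_walk E xs \<and> set xs \<subseteq> W \<and> hd xs = a \<and> last xs = b"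
proof (induction rule: reach.induct)
  case (rrefl a) thus ?case by (intro exI[of _ "[a]"]) (simp add: is_walk_def)
next
  case (rstep a b c)
  then obtain xs where "is_walk E xs" "set xs \<subseteq> W" "hd xs = a" "last xs = b" by blast
  moreover have "is_walk E [c]" by (simp add: is_walk_def)
  ultimately have "is_walk E (xs @ [c])" using rstep by (intro walk_append) auto
  thus ?case using rstep \<open>set xs \<subseteq> W\<close> \<open>hd xs = a\<close> \<open>is_walk E xs\<close>
    by (intro exI[of _ "xs @ [c]"]) (auto simp: is_walk_def)
qed

lemma reach_comp: "reach E W x t \<Longrightarrow> reach E W a x \<Longrightarrow> reach E {b. reach E W a b} x t"
proof (induction rule: reach.induct)
  case (rrefl x) thus ?case by (auto intro: reach.rrefl)
next
  case (rstep x b c)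
  have "reach E W a c" using rstep reach_trans by (metis reach.rstep)
  thus ?case using rstep by (auto intro: reach.rstep)
qed

lemma no_hole:
  assumes ch: "chordal V E" and sym: "\<And>x y. E x y \<Longrightarrow> E y x"
    and len: "length P \<ge> 2" and PV: "set P \<subseteq> V" and wV: "w \<in> V" and yV: "y \<in> V"
    and dist: "distinct P" and wP: "w \<notin> set P" and yP: "y \<notin> set P" and wy: "w \<noteq> y"
    and Ewy: "E w y" and Ew0: "E w (P ! 0)" and Ely: "E (P ! (length P - 1)) y"
    and cons: "\<And>j. Suc j < length P \<Longrightarrow> E (P ! j) (P ! Suc j)"
    and ind: "\<And>i j. Suc i < j \<Longrightarrow> j < length P \<Longrightarrow> \<not> E (P ! i) (P ! j)"
    and nw: "\<And>j. 0 < j \<Longrightarrow> j < length P \<Longrightarrow> \<not> E w (P ! j)"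
    and ny: "\<And>j. Suc j < length P \<Longrightarrow> \<not> E (P ! j) y"
  shows False
proof -
  define n where "n = length P"
  define cs where "cs = w # P @ [y]"
  have L: "length cs = n + 2" by (simp add: cs_def n_def)
  have c0: "cs ! 0 = w" by (simp add: cs_def)
  have cP: "\<And>j. j < n \<Longrightarrow> cs ! Suc j = P ! j" by (simp add: cs_def n_def nth_append)
  have cy: "cs ! Suc n = y" by (simp add: cs_def n_def nth_append)
  have n2: "n \<ge> 2" using len n_def by simp
  have "distinct cs" using dist wP yP wy by (simp add: cs_def)
  moreover have "set cs \<subseteq> V" using PV wV yV by (simp add: cs_def)
  moreover have "length cs > 3" using L n2 by simp
  moreover have "\<forall>i < length cs. E (cs ! i) (cs ! ((i + 1) mod length cs))"
  proof (intro allI impI)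
    fix i assume i: "i < length cs"
    show "E (cs ! i) (cs ! ((i + 1) mod length cs))"
    proof (cases "i = n + 1")
      case True
      hence "(i + 1) mod length cs = 0" using L by simp
      thus ?thesis using True cy c0 Ewy sym by simp
    next
      case False
      hence m: "(i + 1) mod length cs = Suc i" using L i by simp
      show ?thesis
      proof (cases i)
        case 0 thus ?thesis using m c0 cP[of 0] n2 Ew0 by simp
      next
        case (Suc j)
        show ?thesis
        proof (cases "j = n - 1")
          case True
          hence "Suc i = Suc n" using Suc n2 by simp
          thus ?thesis using m cy cP[of j] True Suc n2 Ely n_def by simp
        next
          case False
          hence "Suc j < n" using Suc i L \<open>i \<noteq> n + 1\<close> by simp
          thus ?thesis using m cP[of j] cP[of "Suc j"] Suc cons n_def by simp
        qed
      qed
    qed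
  qed
  ultimately obtain i j where ij: "i < length cs" "j < length cs" "i \<noteq> j"
      "j \<noteq> (i + 1) mod length cs" "i \<noteq> (j + 1) mod length cs" "E (cs ! i) (cs ! j)"
    using ch unfolding chordal_def by blast
  have gen: "\<And>i j. i < j \<Longrightarrow> j < n + 2 \<Longrightarrow> j \<noteq> (i + 1) mod (n+2) \<Longrightarrow>
      i \<noteq> (j + 1) mod (n+2) \<Longrightarrow> E (cs ! i) (cs ! j) \<Longrightarrow> False"
  proof -
    fix i j assume a: "i < j" "j < n + 2" "j \<noteq> (i + 1) mod (n+2)"
      "i \<noteq> (j + 1) mod (n+2)" "E (cs ! i) (cs ! j)"
    have ji: "j \<noteq> i + 1" using a by simp
    show False
    proof (cases "i = 0")
      case True
      hence "j \<noteq> n + 1" using a by auto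
      hence "j \<le> n" "j \<ge> 2" using a ji True by auto
      then obtain k where k: "j = Suc k" "0 < k" "k < n" by (cases j) auto
      thus False using a True c0 cP[of k] nw[of k] n_def by simp
    next
      case False
      then obtain k where k: "i = Suc k" by (cases i) auto
      show False
      proof (cases "j = n + 1")
        case True
        hence "Suc k < n" using k ji a by auto
        thus False using a True k cy cP[of k] ny[of k] n_def by simp
      next
        case False
        then obtain l where l: "j = Suc l" "l < n" using a k by (cases j) auto
        have "Suc k < l" using k l ji a by auto
        thus False using a k l cP ind[of k l] n_def by simp
      qed
    qed
  qed
  show False
  proof (cases "i < j")
    case True thus False using gen[of i j] ij L by simp
  next
    case False
    hence "j < i" using ij by simp
    thus False using gen[of j i] ij L sym by simp
  qed
qed

lemma last_take_Suc: "j < length xs \<Longrightarrow> last (take (Suc j) xs) = xs ! j"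
  by (simp add: take_Suc_conv_app_nth)

lemma key:
  assumes ch: "chordal V E" and sym: "\<And>x y. E x y \<Longrightarrow> E y x" and irr: "\<And>x. \<not> E x x"
    and finV: "finite V" and UV: "U \<subseteq> V" and SU: "S \<subseteq> U"
    and cl: "\<forall>u\<in>S. \<forall>v\<in>S. u \<noteq> v \<longrightarrow> E u v" and a: "a \<in> U - S"
    and A_def: "A = {b. reach E (U - S) a b}" and N_def: "N = {s\<in>S. \<exists>z\<in>A. E z s}"
  shows "\<exists>x\<in>A. \<forall>y\<in>N. E x y"
proof -
  have AUS: "A \<subseteq> U - S" using A_def reach_in by fastforce
  have "A \<subseteq> V" using AUS UV by blast
  hence finA: "finite A" using finV by (rule finite_subset)
  have aA: "a \<in> A" using a A_def by (auto intro: reach.rrefl)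
  have "N \<subseteq> V" unfolding N_def using SU UV by blast
  hence finN: "finite N" using finV by (rule finite_subset)
  define f where "f z = card (N \<inter> {y. E z y})" for z
  obtain x where xA: "x \<in> A" and xmax: "\<And>z. z \<in> A \<Longrightarrow> f z \<le> f x"
  proof -
    have "Max (f ` A) \<in> f ` A" using finA aA by (intro Max_in) auto
    then obtain x where x1: "x \<in> A" and x2: "f x = Max (f ` A)" by auto
    have "\<forall>z\<in>A. f z \<le> f x" using finA x2 by simp
    thus ?thesis using that x1 by blast
  qed
  show ?thesis
  proof (rule ccontr)
    assume "\<not> ?thesis"
    then obtain y where yN: "y \<in> N" and nxy: "\<not> E x y" using xA by blast
    define T where "T = {z\<in>A. E z y}"
    obtain t where tT: "t \<in> T" using yN N_def T_def by auto
    have rx: "reach E (U - S) a x" using xA A_def by simp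
    have rt: "reach E (U - S) a t" using tT T_def A_def by simp
    have "reach E (U - S) x t" using reach_sym[OF sym rx] rt reach_trans by metis
    hence "reach E A x t" using reach_comp[OF _ rx] A_def by simp
    then obtain qs where "is_walk E qs" "set qs \<subseteq> A" "hd qs = x" "last qs = t"
      using reach_walk by metis
    define Q where "Q ps = (is_walk E ps \<and> set ps \<subseteq> A \<and> hd ps = x \<and> last ps \<in> T)" for ps
    have "Q qs" using Q_def \<open>is_walk E qs\<close> \<open>set qs \<subseteq> A\<close> \<open>hd qs = x\<close> \<open>last qs = t\<close> tT by simp
    then obtain ps where Qps: "Q ps" and psmin: "\<And>qs. Q qs \<Longrightarrow> length ps \<le> length qs"
      using ex_has_least_nat[of Q qs length] by blast
    have wps: "is_walk E ps" and psA: "set ps \<subseteq> A" and hps: "hd ps = x" and lps: "last ps \<in> T"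
      using Qps Q_def by auto
    have ne: "ps \<noteq> []" using wps is_walk_def by auto
    define k where "k = length ps - 1"
    have lenk: "length ps = Suc k" using ne k_def by simp
    have ps0: "ps ! 0 = x" using hps ne by (simp add: hd_conv_nth)
    have psk: "ps ! k = last ps" using ne k_def by (simp add: last_conv_nth)
    have psinA: "\<And>j. j \<le> k \<Longrightarrow> ps ! j \<in> A" using psA lenk
      by (metis le_imp_less_Suc nth_mem subsetD)
    have cons: "\<And>j. Suc j < length ps \<Longrightarrow> E (ps ! j) (ps ! Suc j)" using wps is_walk_def by auto
    have notT: "\<And>j. j < k \<Longrightarrow> ps ! j \<notin> T"
    proof
      fix j assume j: "j < k" and jT: "ps ! j \<in> T"
      have "Q (take (Suc j) ps)" unfolding Q_def
      proof (intro conjI)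
        show "is_walk E (take (Suc j) ps)" using walk_take[OF wps] by simp
        show "set (take (Suc j) ps) \<subseteq> A" using psA set_take_subset by fastforce
        show "hd (take (Suc j) ps) = x" using hps ne by simp
        show "last (take (Suc j) ps) \<in> T" using jT j lenk by (simp add: last_take_Suc)
      qed
      from psmin[OF this] show False using j lenk by simp
    qed
    have ind: "\<And>i j. Suc i < j \<Longrightarrow> j < length ps \<Longrightarrow> \<not> E (ps ! i) (ps ! j)"
    proof
      fix i j assume ij: "Suc i < j" "j < length ps" and e: "E (ps ! i) (ps ! j)"
      let ?qs = "take (Suc i) ps @ drop j ps"
      have "Q ?qs" unfolding Q_def
      proof (intro conjI)
        have "last (take (Suc i) ps) = ps ! i" using ij by (simp add: last_take_Suc)
        moreover have "hd (drop j ps) = ps ! j" using ij by (simp add: hd_drop_conv_nth)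
        ultimately show "is_walk E ?qs" using e walk_take[OF wps, of "Suc i"] walk_drop[OF wps ij(2)]
          by (intro walk_append) auto
        show "set ?qs \<subseteq> A" using psA set_take_subset set_drop_subset by fastforce
        show "hd ?qs = x" using hps ne by simp
        show "last ?qs \<in> T" using lps ij by simp
      qed
      from psmin[OF this] show False using ij by simp
    qed
    have dist: "distinct ps"
    proof (rule ccontr)
      assume "\<not> distinct ps"
      then obtain i j where ij: "i < j" "j < length ps" "ps ! i = ps ! j"
        by (metis distinct_conv_nth linorder_neqE_nat)
      show False
      proof (cases "j = k")
        case True
        thus False using ij notT[of i] lps psk by simp
      next
        case False
        hence "Suc j < length ps" using ij lenk by simp
        hence "E (ps ! i) (ps ! Suc j)" using cons ij by metis
        thus False using ind[of i "Suc j"] ij \<open>Suc j < length ps\<close> by simp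
      qed
    qed
    obtain w where wN: "w \<in> N" and xw: "E x w" and nkw: "\<not> E (ps ! k) w"
    proof (rule ccontr)
      assume "\<not> thesis"
      hence sub: "N \<inter> {y. E x y} \<subseteq> N \<inter> {y'. E (ps ! k) y'}" using that by blast
      have "y \<in> N \<inter> {y'. E (ps ! k) y'}" using yN lps psk T_def by simp
      moreover have "y \<notin> N \<inter> {y. E x y}" using nxy by simp
      ultimately have "N \<inter> {y. E x y} \<subset> N \<inter> {y'. E (ps ! k) y'}" using sub by blast
      hence "f x < f (ps ! k)" unfolding f_def using finN by (intro psubset_card_mono) auto
      moreover have "f (ps ! k) \<le> f x" using xmax psinA by simp
      ultimately show False by simp
    qed
    define I where "I = {j. j \<le> k \<and> E (ps ! j) w}"
    have "0 \<in> I" using I_def ps0 xw by simp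
    have finI: "finite I" using I_def by simp
    define i where "i = Max I"
    have iI: "i \<in> I" using finI \<open>0 \<in> I\<close> i_def Max_in by blast
    have imax: "\<And>j. j \<in> I \<Longrightarrow> j \<le> i" using finI i_def by simp
    have ik: "i < k" using iI I_def nkw le_neq_implies_less by auto
    have Eiw: "E (ps ! i) w" using iI I_def by simp
    define P where "P = drop i ps"
    have lenP: "length P = Suc k - i" using P_def lenk by simp
    have Pn: "\<And>j. j < length P \<Longrightarrow> P ! j = ps ! (i + j)" using P_def lenk by simp
    have wS: "w \<in> S" and yS: "y \<in> S" using wN yN N_def by auto
    have PA: "set P \<subseteq> A" using P_def psA set_drop_subset by fastforce
    show False
    proof (rule no_hole[OF ch sym, of P w y])
      show "2 \<le> length P" using lenP ik by simp
      show "set P \<subseteq> V" using PA AUS UV by auto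
      show "w \<in> V" "y \<in> V" using wS yS SU UV by auto
      show "distinct P" using dist P_def by simp
      show "w \<notin> set P" "y \<notin> set P" using PA AUS wS yS by auto
      show "w \<noteq> y" using xw nxy by auto
      show "E w y" using cl wS yS \<open>w \<noteq> y\<close> by simp
      show "E w (P ! 0)" using Pn[of 0] lenP ik Eiw sym by simp
      show "E (P ! (length P - 1)) y" using Pn[of "length P - 1"] lenP ik psk lps T_def by simp
      show "\<And>j. Suc j < length P \<Longrightarrow> E (P ! j) (P ! Suc j)"
      proof -
        fix j assume j: "Suc j < length P"
        have "Suc (i + j) < length ps" using j lenP lenk by simp
        hence "E (ps ! (i + j)) (ps ! Suc (i + j))" by (rule cons)
        thus "E (P ! j) (P ! Suc j)" using Pn[of j] Pn[of "Suc j"] j by simp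
      qed
      show "\<And>i' j. Suc i' < j \<Longrightarrow> j < length P \<Longrightarrow> \<not> E (P ! i') (P ! j)"
      proof -
        fix i' j assume j: "Suc i' < j" "j < length P"
        have "Suc (i + i') < i + j" "i + j < length ps" using j lenP lenk by simp_all
        hence "\<not> E (ps ! (i + i')) (ps ! (i + j))" by (rule ind)
        thus "\<not> E (P ! i') (P ! j)" using Pn[of i'] Pn[of j] j by simp
      qed
      show "\<And>j. 0 < j \<Longrightarrow> j < length P \<Longrightarrow> \<not> E w (P ! j)"
      proof
        fix j assume j: "0 < j" "j < length P" and e: "E w (P ! j)"
        have "i + j \<in> I" using I_def Pn[OF j(2)] e sym j lenP by auto
        thus False using imax j by fastforce
      qed
      show "\<And>j. Suc j < length P \<Longrightarrow> \<not> E (P ! j) y"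
      proof
        fix j assume j: "Suc j < length P" and e: "E (P ! j) y"
        have "ps ! (i + j) \<in> T" using T_def Pn[of j] j e psinA lenP by auto
        thus False using notT[of "i+j"] j lenP by simp
      qed
    qed
  qed
qed

lemma balanced:
  assumes ch: "chordal V E" and sym: "\<And>x y. E x y \<Longrightarrow> E y x" and irr: "\<And>x. \<not> E x x"
    and finV: "finite V" and UV: "U \<subseteq> V"
  shows "\<forall>S. S \<subseteq> U \<and> (\<forall>u\<in>S. \<forall>v\<in>S. u \<noteq> v \<longrightarrow> E u v) \<and>
           (\<forall>b\<in>U - S. card {c. reach E (U - S) b c} \<le> k) \<longrightarrow>
         (\<exists>S'. S' \<subseteq> U \<and> (\<forall>u\<in>S'. \<forall>v\<in>S'. u \<noteq> v \<longrightarrow> E u v) \<and>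
           (\<forall>b\<in>U - S'. 2 * card {c. reach E (U - S') b c} \<le> card U))"
proof (induction k rule: less_induct)
  case (less k)
  show ?case
  proof (intro allI impI)
    fix S assume h: "S \<subseteq> U \<and> (\<forall>u\<in>S. \<forall>v\<in>S. u \<noteq> v \<longrightarrow> E u v) \<and>
           (\<forall>b\<in>U - S. card {c. reach E (U - S) b c} \<le> k)"
    have SU: "S \<subseteq> U" and cl: "\<forall>u\<in>S. \<forall>v\<in>S. u \<noteq> v \<longrightarrow> E u v"
      and bnd: "\<forall>b\<in>U - S. card {c. reach E (U - S) b c} \<le> k" using h by auto
    have finU: "finite U" using UV finV by (rule finite_subset)
    show "\<exists>S'. S' \<subseteq> U \<and> (\<forall>u\<in>S'. \<forall>v\<in>S'. u \<noteq> v \<longrightarrow> E u v) \<and>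
           (\<forall>b\<in>U - S'. 2 * card {c. reach E (U - S') b c} \<le> card U)"
    proof (cases "\<forall>b\<in>U - S. 2 * card {c. reach E (U - S) b c} \<le> card U")
      case True
      show ?thesis by (rule exI[of _ S]) (use SU cl True in simp)
    next
      case False
      then obtain a where a: "a \<in> U - S" and big: "2 * card {c. reach E (U - S) a c} > card U"
        by (meson not_le)
      define A where "A = {c. reach E (U - S) a c}"
      define N where "N = {s\<in>S. \<exists>z\<in>A. E z s}"
      obtain x where xA: "x \<in> A" and xN: "\<forall>y\<in>N. E x y"
        using key[OF ch sym irr finV UV SU cl a A_def N_def] by blast
      have AUS: "A \<subseteq> U - S" unfolding A_def using reach_in by fastforce
      have "A \<subseteq> U" using AUS by blast
      hence finA: "finite A" using finU by (rule finite_subset)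
      have cardA: "card A \<le> k" using bnd a A_def by simp
      have bigA: "2 * card A > card U" using big A_def by simp
      have "card A > 0" using finA xA by (auto simp: card_gt_0_iff)
      hence cA1: "card A \<ge> 1" by simp
      define S' where "S' = insert x N"
      have NS: "N \<subseteq> S" using N_def by blast
      have S'U: "S' \<subseteq> U" using S'_def NS SU xA AUS by blast
      have xS: "x \<notin> S" using xA AUS by blast
      have cl': "\<forall>u\<in>S'. \<forall>v\<in>S'. u \<noteq> v \<longrightarrow> E u v"
      proof (intro ballI impI)
        fix u v assume u: "u \<in> S'" and v: "v \<in> S'" and uv: "u \<noteq> v"
        show "E u v"
        proof (cases "u = x")
          case True thus ?thesis using v uv xN S'_def by auto
        next
          case False
          hence uN: "u \<in> N" using u S'_def by simp
          show ?thesis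
          proof (cases "v = x")
            case True thus ?thesis using uN xN sym by blast
          next
            case False thus ?thesis using v uN uv cl NS S'_def by auto
          qed
        qed
      qed
      have claim1: "reach E (U - S') b c \<Longrightarrow> b \<in> A \<Longrightarrow> c \<in> A \<and> c \<noteq> x" for b c
      proof (induction rule: reach.induct)
        case (rrefl b) thus ?case using S'_def by auto
      next
        case (rstep b c d)
        have cA: "c \<in> A" using rstep by blast
        have "d \<notin> S"
        proof
          assume "d \<in> S"
          hence "d \<in> N" using N_def cA rstep(2) by blast
          thus False using rstep(3) S'_def by blast
        qed
        hence "d \<in> U - S" using rstep(3) by blast
        moreover have "reach E (U - S) a c" using cA A_def by simp
        ultimately have "reach E (U - S) a d" using rstep(2) reach.rstep[of E "U - S" a c d] by simp
        thus ?case using A_def rstep(3) S'_def by auto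
      qed
      have bnd': "\<forall>b\<in>U - S'. card {c. reach E (U - S') b c} \<le> card A - 1"
      proof
        fix b assume b: "b \<in> U - S'"
        show "card {c. reach E (U - S') b c} \<le> card A - 1"
        proof (cases "b \<in> A")
          case True
          have "{c. reach E (U - S') b c} \<subseteq> A - {x}"
          proof
            fix c assume "c \<in> {c. reach E (U - S') b c}"
            hence "reach E (U - S') b c" by simp
            from claim1[OF this True] show "c \<in> A - {x}" by simp
          qed
          hence "card {c. reach E (U - S') b c} \<le> card (A - {x})"
            using finA by (intro card_mono) auto
          thus ?thesis using xA finA by simp
        next
          case False
          have "{c. reach E (U - S') b c} \<subseteq> U - A"
          proof
            fix c assume "c \<in> {c. reach E (U - S') b c}"
            hence r: "reach E (U - S') b c" by simp
            hence "c \<in> U" using reach_in[OF r] by simp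
            moreover have "c \<notin> A"
            proof
              assume "c \<in> A"
              from claim1[OF reach_sym[OF sym r] this] have "b \<in> A" by simp
              thus False using False by simp
            qed
            ultimately show "c \<in> U - A" by simp
          qed
          hence "card {c. reach E (U - S') b c} \<le> card (U - A)"
            using finU by (intro card_mono) auto
          also have "card (U - A) = card U - card A" using AUS finA by (intro card_Diff_subset) auto
          finally show ?thesis using bigA by simp
        qed
      qed
      have "card A - 1 < k" using cardA cA1 by simp
      have "\<forall>b\<in>U - S'. card {c. reach E (U - S') b c} \<le> card A - 1" by (rule bnd')
      from less.IH[OF \<open>card A - 1 < k\<close>, rule_format, of S'] S'U cl' this show ?thesis by simp
    qed
  qed
qed

lemma sp_exists:
  assumes "connected_graph V E" "a \<in> V" "b \<in> V"
  shows "\<exists>xs. shortest_path E a b xs"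
proof -
  obtain xs where xs: "is_walk E xs" "hd xs = a" "last xs = b"
    using assms unfolding connected_graph_def by blast
  have ne: "xs \<noteq> []" using xs(1) unfolding is_walk_def by simp
  let ?P = "\<lambda>n. \<exists>xs. is_walk E xs \<and> hd xs = a \<and> last xs = b \<and> length xs = Suc n"
  have "?P (length xs - 1)" using xs ne by (intro exI[of _ xs]) simp
  hence "?P (LEAST n. ?P n)" by (rule LeastI)
  thus ?thesis unfolding shortest_path_def gdist_def by blast
qed

theorem lemma14:
  fixes V :: "'a set" and E :: "'a \<Rightarrow> 'a \<Rightarrow> bool" and U :: "'a set"
  assumes "simple_graph V E"
    and "connected_graph V E"
    and "chordal V E"
    and "U \<subseteq> V" and "U \<noteq> {}"
    and "self_contained E U"
  shows "Max ((\<lambda>v. pfrac E U v) ` U) \<ge> 1 / (2 * (real (max_degree V E) + 1))"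
proof -
  have finV: "finite V" and EV: "\<And>x y. E x y \<Longrightarrow> x \<in> V \<and> y \<in> V"
    and sym: "\<And>x y. E x y \<Longrightarrow> E y x" and irr: "\<And>x. \<not> E x x"
    using assms(1) unfolding simple_graph_def by auto
  have UV: "U \<subseteq> V" by (rule assms(4))
  have finU: "finite U" using UV finV by (rule finite_subset)
  define n where "n = card U"
  have npos: "n > 0" using finU assms(5) n_def by (simp add: card_gt_0_iff)
  have init: "\<forall>b\<in>U - {}. card {c. reach E (U - {}) b c} \<le> card U"
  proof
    fix b assume "b \<in> U - {}"
    have "{c. reach E (U - {}) b c} \<subseteq> U"
    proof
      fix c assume "c \<in> {c. reach E (U - {}) b c}"
      hence r: "reach E (U - {}) b c" by simp
      show "c \<in> U" using reach_in[OF r] by simp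
    qed
    thus "card {c. reach E (U - {}) b c} \<le> card U" using finU by (rule card_mono[rotated])
  qed
  have "{} \<subseteq> U \<and> (\<forall>u\<in>{}. \<forall>v\<in>{}. u \<noteq> v \<longrightarrow> E u v) \<and>
           (\<forall>b\<in>U - {}. card {c. reach E (U - {}) b c} \<le> card U)" (is ?H0) using init by simp
  hence h0: ?H0 .
  have B: "\<forall>S. S \<subseteq> U \<and> (\<forall>u\<in>S. \<forall>v\<in>S. u \<noteq> v \<longrightarrow> E u v) \<and>
           (\<forall>b\<in>U - S. card {c. reach E (U - S) b c} \<le> card U) \<longrightarrow>
         (\<exists>S'. S' \<subseteq> U \<and> (\<forall>u\<in>S'. \<forall>v\<in>S'. u \<noteq> v \<longrightarrow> E u v) \<and>
           (\<forall>b\<in>U - S'. 2 * card {c. reach E (U - S') b c} \<le> card U))"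
    by (rule balanced[of V E U "card U"]) (fact assms(3), fact sym, fact irr, fact finV, fact UV)
  have "\<exists>S'. S' \<subseteq> U \<and> (\<forall>u\<in>S'. \<forall>v\<in>S'. u \<noteq> v \<longrightarrow> E u v) \<and>
           (\<forall>b\<in>U - S'. 2 * card {c. reach E (U - S') b c} \<le> card U)" by (rule mp[OF spec[OF B, of "{}"] h0])
  then obtain S where SU: "S \<subseteq> U" and cl: "\<forall>u\<in>S. \<forall>v\<in>S. u \<noteq> v \<longrightarrow> E u v"
    and bal: "\<forall>b\<in>U - S. 2 * card {c. reach E (U - S) b c} \<le> card U" by blast
  have finS: "finite S" using SU finU by (rule finite_subset)
  define Pv where "Pv v = {(a, b) \<in> U \<times> U. \<exists>xs. shortest_path E a b xs \<and> v \<in> set xs}" for v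
  define C where "C a = {c. reach E (U - S) a c}" for a
  define R where "R = Sigma (U - S) C"
  have cover: "U \<times> U \<subseteq> R \<union> (\<Union>s\<in>S. Pv s)"
  proof
    fix p assume p: "p \<in> U \<times> U"
    then obtain a b where ab: "p = (a, b)" "a \<in> U" "b \<in> U" by blast
    obtain xs where sp: "shortest_path E a b xs" using sp_exists[OF assms(2)] ab UV by blast
    have xsU: "set xs \<subseteq> U" using assms(6) sp ab unfolding self_contained_def by blast
    have wk: "is_walk E xs" "hd xs = a" "last xs = b" using sp unfolding shortest_path_def by auto
    show "p \<in> R \<union> (\<Union>s\<in>S. Pv s)"
    proof (cases "\<exists>s\<in>S. s \<in> set xs")
      case True
      then obtain s where "s \<in> S" "s \<in> set xs" by blast
      hence "p \<in> Pv s" unfolding Pv_def using ab sp by blast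
      thus ?thesis using \<open>s \<in> S\<close> by blast
    next
      case False
      hence "set xs \<subseteq> U - S" using xsU by blast
      from walk_reach[OF wk(1) this] have r: "reach E (U - S) a b" using wk by simp
      have "a \<in> U - S" using reach_in[OF r] by simp
      moreover have "b \<in> C a" using r by (simp add: C_def)
      ultimately show ?thesis using ab by (simp add: R_def)
    qed
  qed
  have finUU: "finite (U \<times> U)" using finU by simp
  have CU: "C a \<subseteq> U" for a
  proof
    fix c assume "c \<in> C a"
    hence r: "reach E (U - S) a c" by (simp add: C_def)
    show "c \<in> U" using reach_in[OF r] by simp
  qed
  have finC: "finite (C a)" for a using CU finU by (rule finite_subset)
  have RUU: "R \<subseteq> U \<times> U" using CU R_def by auto
  have finR: "finite R" using RUU finUU by (rule finite_subset)
  have PvUU: "Pv s \<subseteq> U \<times> U" for s unfolding Pv_def by auto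
  have finPv: "finite (Pv s)" for s using PvUU finUU by (rule finite_subset)
  have "n * n = card (U \<times> U)" using n_def by (simp add: card_cartesian_product)
  also have "\<dots> \<le> card (R \<union> (\<Union>s\<in>S. Pv s))"
    using cover finR finS finPv by (intro card_mono) auto
  also have "\<dots> \<le> card R + card (\<Union>s\<in>S. Pv s)" by (rule card_Un_le)
  also have "card (\<Union>s\<in>S. Pv s) \<le> (\<Sum>s\<in>S. card (Pv s))" using finS by (rule card_UN_le)
  finally have c1: "n * n \<le> card R + (\<Sum>s\<in>S. card (Pv s))" by simp
  have "card R = (\<Sum>a\<in>U - S. card (C a))" unfolding R_def
    using finU finC by (intro card_SigmaI) auto
  hence "2 * card R = (\<Sum>a\<in>U - S. 2 * card (C a))" by (simp add: sum_distrib_left)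
  also have "\<dots> \<le> (\<Sum>a\<in>U - S. n)" using bal by (intro sum_mono) (auto simp: C_def n_def)
  also have "\<dots> = card (U - S) * n" by simp
  also have "\<dots> \<le> n * n" using finU n_def by (simp add: card_Diff_subset[OF finS SU])
  finally have c2: "2 * card R \<le> n * n" .
  have c3: "n * n \<le> 2 * (\<Sum>s\<in>S. card (Pv s))" using c1 c2 by linarith
  have Sne: "S \<noteq> {}"
  proof
    assume "S = {}"
    hence "n * n \<le> 0" using c3 by simp
    thus False using npos by simp
  qed
  define M where "M = Max ((\<lambda>v. pfrac E U v) ` U)"
  have nn: "real (card (U \<times> U)) = real n * real n" using n_def by (simp add: card_cartesian_product)
  have nnpos: "real n * real n > 0" using npos by simp
  have Pb: "real (card (Pv s)) \<le> M * (real n * real n)" if s: "s \<in> S" for s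
  proof -
    have "pfrac E U s \<le> M" unfolding M_def using finU s SU by (intro Max_ge) auto
    moreover have "pfrac E U s = real (card (Pv s)) / (real n * real n)"
      unfolding pfrac_def Pv_def using nn by simp
    ultimately show ?thesis using nnpos by (simp add: divide_le_eq)
  qed
  have "real n * real n \<le> 2 * real (\<Sum>s\<in>S. card (Pv s))" using c3
    by (metis of_nat_le_iff of_nat_mult of_nat_numeral)
  also have "real (\<Sum>s\<in>S. card (Pv s)) = (\<Sum>s\<in>S. real (card (Pv s)))" by simp
  also have "\<dots> \<le> (\<Sum>s\<in>S. M * (real n * real n))" using Pb by (intro sum_mono) auto
  also have "\<dots> = real (card S) * M * (real n * real n)" by simp
  finally have "1 * (real n * real n) \<le> (2 * real (card S) * M) * (real n * real n)"
    by (simp add: algebra_simps)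
  hence key1: "1 \<le> 2 * real (card S) * M" using nnpos mult_le_cancel_right_pos by blast
  obtain s0 where s0: "s0 \<in> S" using Sne by blast
  have "S \<subseteq> insert s0 {u \<in> V. E s0 u}"
  proof
    fix u assume u: "u \<in> S"
    show "u \<in> insert s0 {u \<in> V. E s0 u}"
    proof (cases "u = s0")
      case False
      hence "E s0 u" using cl u s0 by simp
      thus ?thesis using EV by simp
    qed simp
  qed
  hence "card S \<le> card (insert s0 {u \<in> V. E s0 u})" using finV by (intro card_mono) auto
  also have "\<dots> \<le> Suc (card {u \<in> V. E s0 u})" using finV by (simp add: card_insert_if)
  also have "card {u \<in> V. E s0 u} \<le> max_degree V E"
    unfolding max_degree_def using finV s0 SU UV by (intro Max_ge) auto
  finally have cS: "card S \<le> Suc (max_degree V E)" by simp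
  have cSpos: "card S > 0" using finS Sne by (simp add: card_gt_0_iff)
  have "1 / (2 * (real (max_degree V E) + 1)) \<le> 1 / (2 * real (card S))"
    using cS cSpos by (intro divide_left_mono) auto
  also have "\<dots> \<le> M" using key1 cSpos by (simp add: divide_le_eq mult.assoc mult.commute)
  finally show ?thesis unfolding M_def .
qed

end
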